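(* Let $D\subseteq \mathbb{C}^n$ be open and let $\sigma$ be a strictly plurisubharmonic function of class $C^2$ on $D$. For every compact set $L\subset D$ there exists a constant $K_L>0$ such that the following holds: for every integer $d\ge 1$, every nowhere vanishing holomorphic function $G$ defined on a neighborhood of $L$, and every $K\geq K_L$, the function $(z,w)\mapsto(\sigma(z)+K)\, |G(z)|^2|w|^2$ (with $w\in\mathbb{C}^d$, $|w|$ the Euclidean norm) is strictly plurisubharmonic (i.e. its complex Hessian is positive definite) at every point of $L\times(\mathbb{C}^d\setminus \{0\})$. *)

theory Defs
  imports "HOL-Analysis.Analysis"
begin

text \<open>A "coordinate space" is a type 'p of points together with a shift operation
  sh p i c (add the complex number c to the i-th complex coordinate of p)
  and a finite index set I of complex coordinates.\<close>

text \<open>Real directional derivative of f at p along the real direction c (c = 1 gives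
  the partial derivative in x_i, c = i gives the partial derivative in y_i,
  where z_i = x_i + i y_i).\<close>
definition dpart :: "('p \<Rightarrow> 'i \<Rightarrow> complex \<Rightarrow> 'p) \<Rightarrow> ('p \<Rightarrow> real) \<Rightarrow> 'i \<Rightarrow> complex \<Rightarrow> 'p \<Rightarrow> real" where
  "dpart sh f i c p = deriv (\<lambda>t::real. f (sh p i (of_real t * c))) 0"

text \<open>Complex Hessian entry  d^2 f / (dz_j d(conj z_k))  written with Wirtinger
  derivatives d/dz_j = (d/dx_j - i d/dy_j)/2, d/d(conj z_k) = (d/dx_k + i d/dy_k)/2.\<close>
definition cHess :: "('p \<Rightarrow> 'i \<Rightarrow> complex \<Rightarrow> 'p) \<Rightarrow> ('p \<Rightarrow> real) \<Rightarrow> 'i \<Rightarrow> 'i \<Rightarrow> 'p \<Rightarrow> complex" where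
  "cHess sh f j k p =
     (complex_of_real (dpart sh (dpart sh f k 1) j 1 p + dpart sh (dpart sh f k \<i>) j \<i> p)
      + \<i> * complex_of_real (dpart sh (dpart sh f k \<i>) j 1 p - dpart sh (dpart sh f k 1) j \<i> p)) / 4"

definition spsh_at :: "('p \<Rightarrow> 'i \<Rightarrow> complex \<Rightarrow> 'p) \<Rightarrow> 'i set \<Rightarrow> ('p \<Rightarrow> real) \<Rightarrow> 'p \<Rightarrow> bool" where
  "spsh_at sh I f p \<longleftrightarrow>
     (\<forall>v::'i \<Rightarrow> complex. (\<exists>i\<in>I. v i \<noteq> 0) \<longrightarrow>
        (let S = (\<Sum>j\<in>I. \<Sum>k\<in>I. cHess sh f j k p * v j * cnj (v k))
         in Im S = 0 \<and> Re S > 0))"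

definition sh_vec :: "complex ^ 'n \<Rightarrow> 'n \<Rightarrow> complex \<Rightarrow> complex ^ 'n" where
  "sh_vec z j c = z + axis j c"

text \<open>The space C^n x C^d: points (z, w) with w :: nat => complex, of which only the
  coordinates i < d are used; index set Inl ` UNIV \<union> Inr ` {..<d}.\<close>
definition sh_prod :: "(complex ^ 'n) \<times> (nat \<Rightarrow> complex) \<Rightarrow> 'n + nat \<Rightarrow> complex
                        \<Rightarrow> (complex ^ 'n) \<times> (nat \<Rightarrow> complex)" where
  "sh_prod p k c = (case k of
      Inl j \<Rightarrow> (fst p + axis j c, snd p)
    | Inr i \<Rightarrow> (fst p, (snd p)(i := snd p i + c)))"

definition C2_on :: "(complex ^ 'n) set \<Rightarrow> (complex ^ 'n \<Rightarrow> real) \<Rightarrow> bool" where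
  "C2_on D f \<longleftrightarrow> continuous_on D f \<and>
     (\<forall>j c. c \<in> {1, \<i>} \<longrightarrow>
        (\<forall>p\<in>D. (\<lambda>t::real. f (sh_vec p j (of_real t * c))) differentiable (at 0)) \<and>
        continuous_on D (dpart sh_vec f j c) \<and>
        (\<forall>k e. e \<in> {1, \<i>} \<longrightarrow>
           (\<forall>p\<in>D. (\<lambda>t::real. dpart sh_vec f j c (sh_vec p k (of_real t * e))) differentiable (at 0)) \<and>
           continuous_on D (dpart sh_vec (dpart sh_vec f j c) k e)))"

definition holo_on :: "(complex ^ 'n) set \<Rightarrow> (complex ^ 'n \<Rightarrow> complex) \<Rightarrow> bool" where
  "holo_on U G \<longleftrightarrow> (\<forall>z\<in>U. \<exists>G'. (G has_derivative G') (at z) \<and> (\<forall>c v. G' (c *s v) = c * G' v))"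

end

theory Submission
  imports Defs "HOL-Complex_Analysis.Complex_Analysis"
begin

lemma osgood_deriv:
  fixes F :: "complex \<Rightarrow> complex \<Rightarrow> complex" and r :: real
  assumes r: "r > 0"
    and cont: "continuous_on (cball 0 r \<times> cball 0 r) (\<lambda>(a,b). F a b)"
    and holb: "\<And>a. a \<in> cball 0 r \<Longrightarrow> F a holomorphic_on ball 0 r"
    and hola: "\<And>b. b \<in> cball 0 r \<Longrightarrow> (\<lambda>a. F a b) holomorphic_on ball 0 r"
  shows "(\<lambda>a. deriv (F a) 0) holomorphic_on ball 0 r"
proof -
  have cpt: "compact (cball (0::complex) r \<times> cball (0::complex) r)"
    by (intro compact_Times compact_cball)
  obtain M where M: "\<And>a b. a \<in> cball 0 r \<Longrightarrow> b \<in> cball 0 r \<Longrightarrow> norm (F a b) \<le> M"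
  proof -
    have "bounded ((\<lambda>(a,b). F a b) ` (cball 0 r \<times> cball 0 r))"
      by (intro compact_imp_bounded compact_continuous_image cont cpt)
    then obtain M where "\<forall>x\<in>cball 0 r. \<forall>y\<in>cball 0 r. cmod (F x y) \<le> M"
      by (auto simp: bounded_iff)
    then show ?thesis using that by blast
  qed
  have contb: "continuous_on (cball 0 r) (F a)" if "a \<in> cball 0 r" for a
  proof -
    have "continuous_on (cball 0 r) ((\<lambda>(a,b). F a b) \<circ> (\<lambda>b. (a, b)))"
      by (intro continuous_on_compose continuous_intros continuous_on_subset[OF cont]) (use that in auto)
    then show ?thesis by (simp add: o_def)
  qed
  have conta: "continuous_on (cball 0 r) (\<lambda>a. F a b)" if "b \<in> cball 0 r" for b
  proof -
    have "continuous_on (cball 0 r) ((\<lambda>(a,b). F a b) \<circ> (\<lambda>a. (a, b)))"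
      by (intro continuous_on_compose continuous_intros continuous_on_subset[OF cont]) (use that in auto)
    then show ?thesis by (simp add: o_def)
  qed
  define f where "f h a = (F a h - F a 0) / h" for h a
  have M0: "M \<ge> 0" using M[of 0 0] r norm_ge_zero[of "F 0 0"] by (auto simp del: norm_ge_zero)
  have est: "norm (f h a - deriv (F a) 0) \<le> 2 * M * norm h / r^2"
    if a: "a \<in> cball 0 r" and h: "h \<noteq> 0" "norm h < r/2" for a h
  proof -
    have h0: "h \<in> ball 0 r" using h r by auto
    have i1: "((\<lambda>u. F a u / (u - h)) has_contour_integral (2 * of_real pi * \<i> * F a h)) (circlepath 0 r)"
      using Cauchy_integral_circlepath[OF contb[OF a] holb[OF a], of h] h r by simp
    have i0: "((\<lambda>u. F a u / (u - 0)) has_contour_integral (2 * of_real pi * \<i> * F a 0)) (circlepath 0 r)"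
      using Cauchy_integral_circlepath[OF contb[OF a] holb[OF a], of 0] r by simp
    have i2: "((\<lambda>u. F a u / (u - 0) ^ Suc 1) has_contour_integral ((2 * pi * \<i>) / (fact 1) * (deriv ^^ 1) (F a) 0)) (circlepath 0 r)"
      using Cauchy_has_contour_integral_higher_derivative_circlepath[OF contb[OF a] holb[OF a], of 0 1] r by simp
    have i3: "((\<lambda>u. (F a u / (u - h) - F a u / (u - 0)) / h - F a u / (u - 0) ^ Suc 1) has_contour_integral
       ((2 * of_real pi * \<i> * F a h - 2 * of_real pi * \<i> * F a 0) / h - (2 * pi * \<i>) / (fact 1) * (deriv ^^ 1) (F a) 0)) (circlepath 0 r)"
      by (intro has_contour_integral_diff has_contour_integral_div i0 i1 i2)
    have eqv: "(2 * of_real pi * \<i> * F a h - 2 * of_real pi * \<i> * F a 0) / h - (2 * pi * \<i>) / (fact 1) * (deriv ^^ 1) (F a) 0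
        = (2 * pi * \<i>) * (f h a - deriv (F a) 0)"
      by (simp add: f_def field_simps)
    have "norm ((2 * pi * \<i>) * (f h a - deriv (F a) 0)) \<le> (M * norm h / ((r/2) * r^2)) * (2 * pi * r)"
    proof (rule has_contour_integral_bound_circlepath[OF i3[unfolded eqv]])
      show "0 \<le> M * norm h / ((r/2) * r^2)" using M0 r by auto
      show "0 < r" by (rule r)
      fix u :: complex assume u: "norm (u - 0) = r"
      have u0: "u \<noteq> 0" using u r by auto
      have uh: "u - h \<noteq> 0" using u h r by auto
      have nuh: "norm (u - h) \<ge> r/2"
        using norm_triangle_ineq2[of u h] u h by auto
      have "(F a u / (u - h) - F a u / (u - 0)) / h - F a u / (u - 0) ^ Suc 1 = F a u * h / ((u - h) * u^2)"
        using u0 uh h by (simp add: field_simps power2_eq_square)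
      also have "norm \<dots> = norm (F a u) * norm h / (norm (u - h) * r^2)"
        using u by (simp add: norm_mult norm_divide norm_power)
      also have "\<dots> \<le> M * norm h / ((r/2) * r^2)"
        using M[OF a, of u] M0 u nuh r h by (intro frac_le mult_right_mono mult_mono) auto
      finally show "norm ((F a u / (u - h) - F a u / (u - 0)) / h - F a u / (u - 0) ^ Suc 1) \<le> M * norm h / ((r/2) * r^2)" .
    qed
    then have "2 * pi * norm (f h a - deriv (F a) 0) \<le> (M * norm h / ((r/2) * r^2)) * (2 * pi * r)"
      by (simp add: norm_mult)
    also have "\<dots> = 2 * pi * (2 * M * norm h / r^2)" using r by (simp add: field_simps power2_eq_square)
    finally have "2 * pi * norm (f h a - deriv (F a) 0) \<le> 2 * pi * (2 * M * norm h / r^2)" .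
    then show ?thesis by (rule mult_left_le_imp_le) (use pi_gt_zero in simp)
  qed
  have ul: "uniform_limit (cball 0 r) f (\<lambda>a. deriv (F a) 0) (at 0)"
  proof (rule uniform_limitI)
    fix e :: real assume e: "e > 0"
    define d where "d = min (r/2) (e * r^2 / (2 * M + 1))"
    have d: "d > 0" using r e M0 by (auto simp: d_def)
    show "\<forall>\<^sub>F h in at 0. \<forall>a\<in>cball 0 r. dist (f h a) (deriv (F a) 0) < e"
      unfolding eventually_at
    proof (intro exI[of _ d] conjI allI impI ballI d)
      fix h a :: complex assume h: "h \<in> UNIV" "h \<noteq> 0 \<and> dist h 0 < d" and a: "a \<in> cball 0 r"
      have hn: "norm h < r/2" "norm h < e * r^2 / (2 * M + 1)" using h by (auto simp: d_def)
      have "dist (f h a) (deriv (F a) 0) \<le> 2 * M * norm h / r^2"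
        using est[OF a, of h] h hn by (simp add: dist_norm)
      also have "\<dots> < e"
      proof -
        have "2 * M * norm h \<le> (2*M+1) * norm h" by (simp add: distrib_right)
        also have "\<dots> < (2*M+1) * (e * r^2 / (2 * M + 1))" using hn M0 by (intro mult_strict_left_mono) auto
        also have "\<dots> = e * r^2" using M0 by simp
        finally show ?thesis using r by (simp add: divide_less_eq)
      qed
      finally show "dist (f h a) (deriv (F a) 0) < e" .
    qed
  qed
  have evh: "continuous_on (cball 0 r) (f h) \<and> f h holomorphic_on ball 0 r"
    if hnz: "h \<noteq> 0" and hr: "dist h 0 < r" for h
  proof -
    have hc: "h \<in> cball 0 r" using hr by (auto simp: dist_norm)
    have z: "0 \<in> cball (0::complex) r" using r by simp
    have "continuous_on (cball 0 r) (\<lambda>a. (F a h - F a 0) / h)"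
      using hnz z hc by (auto intro!: continuous_intros conta)
    moreover have "(\<lambda>a. (F a h - F a 0) / h) holomorphic_on ball 0 r"
      using hnz z hc by (auto intro!: holomorphic_intros hola)
    ultimately show ?thesis by (simp add: f_def[abs_def])
  qed
  have ev: "\<forall>\<^sub>F h in at 0. continuous_on (cball 0 r) (f h) \<and> f h holomorphic_on ball 0 r"
    unfolding eventually_at using evh r by blast
  show ?thesis
    by (rule holomorphic_uniform_limit[OF ev ul]) auto
qed



lemma axis_smult: "axis k (b::complex) = b *s (axis k 1 :: complex ^ 'n)"
  by (simp add: axis_def vec_eq_iff)

lemma bl_axis: "bounded_linear (axis k :: complex \<Rightarrow> complex ^ 'n)"
proof -
  have "linear (axis k :: complex \<Rightarrow> complex ^ 'n)"
    by (rule linearI) (simp_all add: axis_def vec_eq_iff)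
  then show ?thesis by (simp add: linear_conv_bounded_linear)
qed

lemma axis_zero [simp]: "axis k 0 = (0 :: complex ^ 'n)"
  by (simp add: axis_def vec_eq_iff)

lemma axis_add: "axis k (a + b) = axis k a + (axis k b :: complex ^ 'n)"
  by (simp add: axis_def vec_eq_iff)

definition Gp :: "(complex ^ 'n \<Rightarrow> complex) \<Rightarrow> 'n \<Rightarrow> complex ^ 'n \<Rightarrow> complex" where
  "Gp G k z = deriv (\<lambda>b. G (z + axis k b)) 0"

lemma holo_line0:
  assumes "holo_on U G" "x + axis k b0 \<in> U"
  shows "\<exists>G'. ((\<lambda>b. G (x + axis k b)) has_field_derivative G' (axis k 1)) (at b0) \<and>
     (G has_derivative G') (at (x + axis k b0)) \<and> (\<forall>c v. G' (c *s v) = c * G' v)"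
proof -
  obtain G' where G': "(G has_derivative G') (at (x + axis k b0))" "\<forall>c v. G' (c *s v) = c * G' v"
    using assms unfolding holo_on_def by blast
  have l: "((\<lambda>b. x + axis k b) has_derivative axis k) (at b0)"
  proof -
    have h: "(axis k has_derivative axis k) (at b0)" by (rule bounded_linear_imp_has_derivative[OF bl_axis])
    have "((\<lambda>b. x + axis k b) has_derivative (\<lambda>b. 0 + axis k b)) (at b0)"
      by (rule has_derivative_add[OF has_derivative_const h])
    then show ?thesis by simp
  qed
  have "((G \<circ> (\<lambda>b. x + axis k b)) has_derivative (G' \<circ> axis k)) (at b0)"
    by (rule diff_chain_at[OF l]) (use G' in simp)
  moreover have "(G' \<circ> axis k) = (\<lambda>b. G' (axis k 1) * b)"
  proof
    fix b show "(G' \<circ> axis k) b = G' (axis k 1) * b"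
      using G'(2) axis_smult[of k b] by (simp add: mult.commute)
  qed
  ultimately have "((\<lambda>b. G (x + axis k b)) has_field_derivative G' (axis k 1)) (at b0)"
    by (simp add: has_field_derivative_def o_def)
  then show ?thesis using G' by blast
qed

lemma holo_line:
  assumes "holo_on U G" "x + axis k b0 \<in> U"
  shows "((\<lambda>b. G (x + axis k b)) has_field_derivative Gp G k (x + axis k b0)) (at b0)"
proof -
  obtain G' where a: "((\<lambda>b. G (x + axis k b)) has_field_derivative G' (axis k 1)) (at b0)"
     and b: "(G has_derivative G') (at (x + axis k b0))" and c: "(\<forall>c v. G' (c *s v) = c * G' v)"
    using holo_line0[OF assms] by blast
  obtain G'' where a2: "((\<lambda>b. G ((x + axis k b0) + axis k b)) has_field_derivative G'' (axis k 1)) (at 0)"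
     and b2: "(G has_derivative G'') (at (x + axis k b0))"
    using holo_line0[OF assms(1), of "x + axis k b0" k 0] assms(2) by auto
  have "G' = G''" using b b2 has_derivative_unique by blast
  then have "Gp G k (x + axis k b0) = G' (axis k 1)"
    using a2 unfolding Gp_def by (simp add: DERIV_imp_deriv)
  then show ?thesis using a by simp
qed

lemma real_line:
  fixes f :: "complex \<Rightarrow> complex"
  assumes "(f has_field_derivative f') (at 0)"
  shows "((\<lambda>t::real. f (of_real t * c)) has_vector_derivative (f' * c)) (at 0)"
proof -
  have a: "(f has_field_derivative f') (at ((\<lambda>b. b * c) 0))" using assms by simp
  have "((\<lambda>b. f (b * c)) has_field_derivative (f' * c)) (at (of_real 0))"
  proof -
    have i: "((\<lambda>b. b) has_field_derivative 1) (at (0::complex))" by (rule DERIV_ident)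
    have "((\<lambda>b. b * c) has_field_derivative 1 * c) (at 0)" using DERIV_cmult_right[OF i, of c] by simp
    then show ?thesis using DERIV_chain2[where g="\<lambda>b. b * c" and x=0 and f=f and Da=f' and Db=c and s=UNIV] a by simp
  qed
  from has_vector_derivative_real_field[OF this] show ?thesis by simp
qed

lemma norm_axis: "norm (axis k (x::complex) :: complex ^ 'n) = norm x"
proof -
  have "(\<Sum>i\<in>UNIV. (cmod ((axis k x :: complex ^ 'n) $ i))\<^sup>2) = (\<Sum>i\<in>UNIV. if i = k then (cmod x)\<^sup>2 else 0)"
    by (rule sum.cong) (auto simp: axis_def)
  then show ?thesis by (simp add: norm_vec_def L2_set_def)
qed

lemma holo_cont:
  assumes "holo_on U G" shows "continuous_on U G"
proof (rule continuous_at_imp_continuous_on, rule ballI)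
  fix z assume "z \<in> U"
  then obtain G' where "(G has_derivative G') (at z)" using assms unfolding holo_on_def by blast
  then show "isCont G z" by (rule has_derivative_continuous)
qed

lemma Gp_line_diff:
  assumes holo: "holo_on U G" and U: "open U" and z: "z \<in> U"
  shows "(\<lambda>a. Gp G k (z + axis j a)) field_differentiable (at 0)"
proof -
  obtain e where e: "e > 0" "ball z e \<subseteq> U" using U z open_contains_ball by blast
  define r where "r = e / 3"
  have r: "r > 0" using e by (simp add: r_def)
  define F where "F a b = G (z + axis j a + axis k b)" for a b
  have inU: "z + axis j a + axis k b \<in> U" if "a \<in> cball 0 r" "b \<in> cball 0 r" for a b
  proof -
    have "norm (axis j a + axis k b :: complex ^ _) \<le> norm a + norm b"
      using norm_triangle_ineq[of "axis j a :: complex ^ _" "axis k b"] by (simp add: norm_axis)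
    also have "\<dots> < e" using that r_def e by auto
    finally have "z + axis j a + axis k b \<in> ball z e"
      using norm_minus_cancel[of "axis j a + axis k b"] by (simp add: dist_norm add.assoc)
    then show ?thesis using e by blast
  qed
  have cont: "continuous_on (cball 0 r \<times> cball 0 r) (\<lambda>(a,b). F a b)"
  proof -
    have c1: "continuous_on (cball 0 r \<times> cball 0 r) (\<lambda>p. z + axis j (fst p) + axis k (snd p) :: complex ^ _)"
      by (intro continuous_intros continuous_on_compose2[OF bounded_linear.continuous_on[OF bl_axis continuous_on_id]] continuous_on_fst continuous_on_snd continuous_on_id) auto
    have "continuous_on (cball 0 r \<times> cball 0 r) (\<lambda>p. G (z + axis j (fst p) + axis k (snd p)))"
      by (rule continuous_on_compose2[OF holo_cont[OF holo] c1]) (auto intro: inU)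
    then show ?thesis by (simp add: F_def case_prod_beta)
  qed
  have holb: "F a holomorphic_on ball 0 r" if "a \<in> cball 0 r" for a
    unfolding holomorphic_on_def F_def
  proof
    fix b :: complex assume "b \<in> ball 0 r"
    then have "(z + axis j a) + axis k b \<in> U" using inU[OF that] by auto
    from holo_line[OF holo this] show "(\<lambda>b. G (z + axis j a + axis k b)) field_differentiable at b within ball 0 r"
      using field_differentiable_at_within field_differentiable_def by blast
  qed
  have hola: "(\<lambda>a. F a b) holomorphic_on ball 0 r" if "b \<in> cball 0 r" for b
    unfolding holomorphic_on_def F_def
  proof
    fix a :: complex assume "a \<in> ball 0 r"
    then have "(z + axis k b) + axis j a \<in> U" using inU[OF _ that, of a] by (auto simp: ac_simps)
    from holo_line[OF holo this] have "(\<lambda>a. G (z + axis k b + axis j a)) field_differentiable at a"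
      using field_differentiable_def by blast
    then show "(\<lambda>a. G (z + axis j a + axis k b)) field_differentiable at a within ball 0 r"
      using field_differentiable_at_within by (simp add: ac_simps)
  qed
  have "(\<lambda>a. deriv (F a) 0) holomorphic_on ball 0 r"
    by (rule osgood_deriv[OF r cont holb hola])
  then have "(\<lambda>a. deriv (F a) 0) field_differentiable (at 0)"
    using r by (intro holomorphic_on_imp_differentiable_at) auto
  moreover have "(\<lambda>a. deriv (F a) 0) = (\<lambda>a. Gp G k (z + axis j a))"
    by (simp add: F_def[abs_def] Gp_def)
  ultimately show ?thesis by simp
qed

lemma cmod2_deriv:
  assumes "(h has_vector_derivative h') (at 0)"
  shows "((\<lambda>t::real. (cmod (h t))\<^sup>2) has_real_derivative 2 * Re (cnj (h 0) * h')) (at 0)"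
proof -
  have e: "(\<lambda>t. (cmod (h t))\<^sup>2) = (\<lambda>t. (Re (h t))\<^sup>2 + (Im (h t))\<^sup>2)"
    by (simp add: cmod_power2)
  have "((\<lambda>t. (Re (h t))\<^sup>2 + (Im (h t))\<^sup>2) has_real_derivative
     (of_nat 2 * (Re h' * (Re (h 0))^(2 - Suc 0)) + of_nat 2 * (Im h' * (Im (h 0))^(2 - Suc 0)))) (at 0)"
    by (intro DERIV_add DERIV_power has_field_derivative_Re has_field_derivative_Im assms)
  then show ?thesis unfolding e by (simp add: algebra_simps)
qed

lemma ev_line:
  fixes z :: "complex ^ 'n" and e :: complex
  assumes "open W" "z \<in> W"
  shows "\<forall>\<^sub>F t in nhds (0::real). z + axis j (of_real t * e) \<in> W"
proof -
  have "continuous_on UNIV (\<lambda>t::real. z + axis j (of_real t * e) :: complex ^ _)"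
    by (intro continuous_intros continuous_on_compose2[OF bounded_linear.continuous_on[OF bl_axis continuous_on_id]]) auto
  then have "open ((\<lambda>t::real. z + axis j (of_real t * e) :: complex ^ _) -` W)"
    using assms(1) open_vimage by blast
  then show ?thesis unfolding eventually_nhds using assms(2) by (intro exI[of _ "(\<lambda>t::real. z + axis j (of_real t * e) :: complex ^ _) -` W"]) auto
qed

lemma fin_ineq:
  fixes B g s q R Gm P X a b N T r :: real
  assumes B: "B > 0" and g: "g > 0" and s: "s > 0" and N: "N \<ge> 0"
    and X: "X = g^2 * R + s^2 * g * Gm + 2 * g * s * P"
    and a: "a \<ge> 0" "a^2 = X" and b: "b \<ge> 0" "b^2 \<le> B * N"
    and r: "r \<ge> - 2 * a * b"
    and qs: "q * s > R"
  shows "B * (g * q + s * Gm + 2 * P) + r + s * g * N > 0"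
proof -
  define T where "T = g * s"
  have T: "T > 0" using g s by (simp add: T_def)
  have e1: "T * (B * (g * q + s * Gm + 2 * P)) = B * g^2 * (q * s - R) + B * X"
    by (simp add: T_def X power2_eq_square algebra_simps)
  have p1: "B * g^2 * (q * s - R) > 0" using B g qs by simp
  have sq: "(B * a - T * b)^2 \<ge> 0" by simp
  have "B * (B * X + T^2 * N - 2 * a * b * T) \<ge> B^2 * X + T^2 * b^2 - 2 * a * b * T * B"
  proof -
    have "T^2 * b^2 \<le> T^2 * (B * N)" using b(2) by (rule mult_left_mono) simp
    then have h: "B * (T^2 * N) \<ge> T^2 * b^2" by (simp add: algebra_simps)
    have "B*(B*X + T^2*N - 2*a*b*T) = B^2*X + B*(T^2*N) - 2*a*b*T*B" by (simp add: power2_eq_square algebra_simps)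
    then show ?thesis using h by linarith
  qed
  moreover have "B^2 * X + T^2 * b^2 - 2 * a * b * T * B = (B * a - T * b)^2"
    by (simp add: a(2)[symmetric] power2_eq_square algebra_simps)
  ultimately have "B * (B * X + T^2 * N - 2 * a * b * T) \<ge> 0" using sq by linarith
  then have p2: "B * X + T^2 * N - 2 * a * b * T \<ge> 0" using B by (simp add: zero_le_mult_iff)
  have "T * (B * (g * q + s * Gm + 2 * P) + r + s * g * N) = B * g^2 * (q * s - R) + (B * X + T^2 * N - 2 * a * b * T) + T * (r + 2 * a * b)"
    using e1 by (simp add: T_def power2_eq_square algebra_simps)
  moreover have "T * (r + 2 * a * b) \<ge> 0" using r T by simp
  ultimately have "T * (B * (g * q + s * Gm + 2 * P) + r + s * g * N) > 0" using p1 p2 by linarith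
  then show ?thesis using T by (simp add: zero_less_mult_iff)
qed

lemma bet_bound:
  fixes w u :: "nat \<Rightarrow> complex"
  shows "(cmod (\<Sum>l<d. w l * cnj (u l)))\<^sup>2 \<le> (\<Sum>l<d. (cmod (w l))\<^sup>2) * (\<Sum>l<d. (cmod (u l))\<^sup>2)"
proof -
  have "cmod (\<Sum>l<d. w l * cnj (u l)) \<le> (\<Sum>l<d. cmod (w l) * cmod (u l))"
    using norm_sum[of "\<lambda>l. w l * cnj (u l)" "{..<d}"] by (simp add: norm_mult)
  then have "(cmod (\<Sum>l<d. w l * cnj (u l)))\<^sup>2 \<le> (\<Sum>l<d. cmod (w l) * cmod (u l))\<^sup>2"
    by (rule power_mono) simp
  also have "\<dots> \<le> (\<Sum>l<d. (cmod (w l))\<^sup>2) * (\<Sum>l<d. (cmod (u l))\<^sup>2)"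
    by (rule Cauchy_Schwarz_ineq_sum)
  finally show ?thesis .
qed

lemma cHess_cont:
  assumes "C2_on D \<sigma>"
  shows "continuous_on D (cHess sh_vec \<sigma> j k)"
proof -
  have c: "continuous_on D (dpart sh_vec (dpart sh_vec \<sigma> k c) j e)" if "c \<in> {1, \<i>}" "e \<in> {1, \<i>}" for c e
    using assms that unfolding C2_on_def by blast
  show ?thesis unfolding cHess_def[abs_def]
    by (intro continuous_intros c) auto
qed

lemma ds_cont:
  assumes "C2_on D \<sigma>" "c \<in> {1, \<i>}"
  shows "continuous_on D (dpart sh_vec \<sigma> j c)"
  using assms unfolding C2_on_def by blast

definition swo :: "(complex ^ 'n \<Rightarrow> real) \<Rightarrow> complex ^ 'n \<Rightarrow> 'n \<Rightarrow> complex" where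
  "swo \<sigma> z j = (complex_of_real (dpart sh_vec \<sigma> j 1 z) - \<i> * complex_of_real (dpart sh_vec \<sigma> j \<i> z)) / 2"

lemma scale_Q:
  "Re (\<Sum>j\<in>UNIV. \<Sum>k\<in>UNIV. H j k * (complex_of_real n * e j) * cnj (complex_of_real n * e k))
   = n^2 * Re (\<Sum>j\<in>UNIV. \<Sum>k\<in>UNIV. H j k * e j * cnj (e k))"
proof -
  have "(\<Sum>j\<in>UNIV. \<Sum>k\<in>UNIV. H j k * (complex_of_real n * e j) * cnj (complex_of_real n * e k))
      = complex_of_real (n^2) * (\<Sum>j\<in>UNIV. \<Sum>k\<in>UNIV. H j k * e j * cnj (e k))"
    by (simp add: sum_distrib_left power2_eq_square algebra_simps)
  then show ?thesis by simp
qed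

lemma scale_R:
  "(cmod (\<Sum>j\<in>UNIV. H j * (complex_of_real n * e j)))\<^sup>2 = n^2 * (cmod (\<Sum>j\<in>UNIV. H j * e j))\<^sup>2"
proof -
  have "(\<Sum>j\<in>UNIV. H j * (complex_of_real n * e j)) = complex_of_real n * (\<Sum>j\<in>UNIV. H j * e j)"
    by (simp add: sum_distrib_left algebra_simps)
  then show ?thesis by (simp add: norm_mult power_mult_distrib)
qed

lemma partA:
  fixes D :: "(complex ^ 'n) set" and \<sigma> :: "complex ^ 'n \<Rightarrow> real"
  assumes C2: "C2_on D \<sigma>" and hyp: "\<forall>z\<in>D. spsh_at sh_vec UNIV \<sigma> z"
    and L: "compact L" "L \<subseteq> D"
  shows "\<exists>KL>0. \<forall>K\<ge>KL. \<forall>z\<in>L. \<sigma> z + K > 0 \<and> (\<forall>\<xi>::'n \<Rightarrow> complex. (\<exists>j. \<xi> j \<noteq> 0) \<longrightarrow>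
      (cmod (\<Sum>j\<in>UNIV. swo \<sigma> z j * \<xi> j))\<^sup>2 < (\<sigma> z + K) * Re (\<Sum>j\<in>UNIV. \<Sum>k\<in>UNIV. cHess sh_vec \<sigma> j k z * \<xi> j * cnj (\<xi> k)))"
proof (cases "L = {}")
  case True
  then show ?thesis by (intro exI[of _ 1]) auto
next
  case False
  define Qf where "Qf p = Re (\<Sum>j\<in>UNIV. \<Sum>k\<in>UNIV. cHess sh_vec \<sigma> j k (fst p) * (snd p $ j) * cnj (snd p $ k))"
    for p :: "(complex ^ 'n) \<times> (complex ^ 'n)"
  define Rf where "Rf p = (cmod (\<Sum>j\<in>UNIV. swo \<sigma> (fst p) j * (snd p $ j)))\<^sup>2"
    for p :: "(complex ^ 'n) \<times> (complex ^ 'n)"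
  define S1 where "S1 = L \<times> sphere (0 :: complex ^ 'n) 1"
  have cS1: "compact S1" unfolding S1_def by (intro compact_Times L compact_sphere)
  have S1D: "S1 \<subseteq> D \<times> UNIV" using L by (auto simp: S1_def)
  have ne: "S1 \<noteq> {}"
  proof -
    obtain z where "z \<in> L" using False by blast
    moreover have "(axis undefined 1 :: complex ^ 'n) \<in> sphere 0 1" by (simp add: norm_axis)
    ultimately show ?thesis unfolding S1_def by blast
  qed
  have vc: "continuous_on S (\<lambda>p::(complex ^ 'n) \<times> (complex ^ 'n). snd p $ j)" for S j
    by (intro continuous_on_compose2[OF bounded_linear.continuous_on[OF bounded_linear_vec_nth continuous_on_id] continuous_on_snd]) auto
  have cQ: "continuous_on S1 Qf"
  proof -
    have "continuous_on S1 (\<lambda>p. cHess sh_vec \<sigma> j k (fst p))" for j k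
      by (rule continuous_on_compose2[OF cHess_cont[OF C2] continuous_on_fst]) (use S1D in auto)
    then show ?thesis unfolding Qf_def[abs_def]
      by (intro continuous_intros vc) auto
  qed
  have cR: "continuous_on S1 Rf"
  proof -
    have "continuous_on S1 (\<lambda>p. dpart sh_vec \<sigma> j c (fst p))" if "c \<in> {1, \<i>}" for j c
      by (rule continuous_on_compose2[OF ds_cont[OF C2 that] continuous_on_fst]) (use S1D in auto)
    then show ?thesis unfolding Rf_def[abs_def] swo_def
      by (intro continuous_intros vc) auto
  qed
  obtain pm where pm: "pm \<in> S1" "\<And>p. p \<in> S1 \<Longrightarrow> Qf pm \<le> Qf p"
    using compact_attains_inf[OF compact_continuous_image[OF cQ cS1]] ne by auto
  obtain pM where pM: "pM \<in> S1" "\<And>p. p \<in> S1 \<Longrightarrow> Rf p \<le> Rf pM"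
    using compact_attains_sup[OF compact_continuous_image[OF cR cS1]] ne by auto
  obtain zm where zm: "zm \<in> L" "\<And>z. z \<in> L \<Longrightarrow> \<sigma> zm \<le> \<sigma> z"
  proof -
    have c: "continuous_on L \<sigma>" using C2 L unfolding C2_on_def by (meson continuous_on_subset)
    have "\<exists>s\<in>\<sigma> ` L. \<forall>t\<in>\<sigma> ` L. s \<le> t"
      by (rule compact_attains_inf[OF compact_continuous_image[OF c L(1)]]) (use False in auto)
    then show ?thesis using that by force
  qed
  define m where "m = Qf pm"
  define M where "M = Rf pM"
  have m: "m > 0"
  proof -
    have "fst pm \<in> D" "snd pm \<noteq> 0" using pm(1) L by (auto simp: S1_def)
    then obtain j where "snd pm $ j \<noteq> 0" by (auto simp: vec_eq_iff)
    then show ?thesis using hyp \<open>fst pm \<in> D\<close> unfolding m_def Qf_def spsh_at_def Let_def by auto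
  qed
  have M: "M \<ge> 0" by (simp add: M_def Rf_def)
  define KL where "KL = \<bar>\<sigma> zm\<bar> + 1 + M / m"
  have KL: "KL > 0" using m M by (simp add: KL_def add_pos_nonneg)
  show ?thesis
  proof (intro exI[of _ KL] conjI KL allI impI ballI)
    fix K z assume K: "KL \<le> K" and z: "z \<in> L"
    have sK: "\<sigma> z + K \<ge> 1 + M / m" using zm(2)[OF z] K unfolding KL_def by linarith
    then show "\<sigma> z + K > 0" using m M by (smt (verit) divide_nonneg_pos)
    fix \<xi> :: "'n \<Rightarrow> complex" assume "\<exists>j. \<xi> j \<noteq> 0"
    define xv where "xv = (\<chi> j. \<xi> j)"
    define n where "n = norm xv"
    have "xv \<noteq> 0" using \<open>\<exists>j. \<xi> j \<noteq> 0\<close> by (auto simp: xv_def vec_eq_iff)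
    then have n: "n > 0" by (simp add: n_def)
    define \<eta> where "\<eta> = (1 / n) *\<^sub>R xv"
    have eta: "\<eta> \<in> sphere 0 1" using n by (simp add: \<eta>_def n_def)
    have xi: "\<xi> j = complex_of_real n * \<eta> $ j" for j
      using n unfolding \<eta>_def vector_scaleR_component xv_def vec_lambda_beta by (simp add: scaleR_conv_of_real)
    have zp: "(z, \<eta>) \<in> S1" using z eta by (simp add: S1_def)
    have q1: "Qf (z, \<eta>) \<ge> m" using pm(2)[OF zp] by (simp add: m_def)
    have r1: "Rf (z, \<eta>) \<le> M" using pM(2)[OF zp] by (simp add: M_def)
    have "Rf (z, \<eta>) < (\<sigma> z + K) * Qf (z, \<eta>)"
    proof -
      have "(1 + M / m) * m \<le> (\<sigma> z + K) * Qf (z, \<eta>)"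
        using sK q1 m M \<open>\<sigma> z + K > 0\<close> by (intro mult_mono) auto
      moreover have "(1 + M / m) * m = m + M" using m by (simp add: field_simps)
      ultimately show ?thesis using r1 m by linarith
    qed
    then have "n^2 * Rf (z, \<eta>) < n^2 * ((\<sigma> z + K) * Qf (z, \<eta>))" using n by simp
    then show "(cmod (\<Sum>j\<in>UNIV. swo \<sigma> z j * \<xi> j))\<^sup>2 < (\<sigma> z + K) * Re (\<Sum>j\<in>UNIV. \<Sum>k\<in>UNIV. cHess sh_vec \<sigma> j k z * \<xi> j * cnj (\<xi> k))"
      unfolding xi scale_Q scale_R by (simp add: Qf_def Rf_def algebra_simps)
  qed
qed

locale LS =
  fixes D :: "(complex ^ 'n) set" and \<sigma> :: "complex ^ 'n \<Rightarrow> real" and U :: "(complex ^ 'n) set"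
    and G :: "complex ^ 'n \<Rightarrow> complex" and K :: real and d :: nat
  assumes openD: "open D" and C2: "C2_on D \<sigma>" and openU: "open U" and holo: "holo_on U G"
    and Gnz: "\<forall>z\<in>U. G z \<noteq> 0"
begin

definition "A z = (\<sigma> z + K) * (cmod (G z))\<^sup>2"
definition "B w = (\<Sum>i<d. (cmod (w i))\<^sup>2)"
definition "ds z k c = dpart sh_vec \<sigma> k c z"
definition "dg z k c = 2 * Re (cnj (G z) * (Gp G k z * c))"
definition "dA z k c = ds z k c * (cmod (G z))\<^sup>2 + (\<sigma> z + K) * dg z k c"
definition "Gq z j k = deriv (\<lambda>a. Gp G k (z + axis j a)) 0"
definition "d2g z j e k c = 2 * Re (cnj (G z) * (Gq z j k * e * c) + cnj (Gp G j z * e) * (Gp G k z * c))"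
definition "dds z j e k c = dpart sh_vec (dpart sh_vec \<sigma> k c) j e z"
definition "d2A z j e k c = dds z j e k c * (cmod (G z))\<^sup>2 + ds z k c * dg z j e
     + ds z j e * dg z k c + (\<sigma> z + K) * d2g z j e k c"

lemma sigma1:
  assumes "z \<in> D" "c \<in> {1, \<i>}"
  shows "((\<lambda>t. \<sigma> (z + axis k (of_real t * c))) has_real_derivative ds z k c) (at 0)"
proof -
  have "(\<lambda>t::real. \<sigma> (sh_vec z k (of_real t * c))) differentiable (at 0)"
    using C2 assms unfolding C2_on_def by blast
  then show ?thesis
    unfolding ds_def dpart_def by (simp add: DERIV_deriv_iff_real_differentiable[symmetric] sh_vec_def)
qed

lemma sigmaK:
  assumes "z \<in> D" "c \<in> {1, \<i>}"
  shows "((\<lambda>t. \<sigma> (z + axis k (of_real t * c)) + K) has_real_derivative ds z k c) (at 0)"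
  using DERIV_add[OF sigma1[OF assms] DERIV_const[of K]] by simp

lemma sigma2:
  assumes "z \<in> D" "c \<in> {1, \<i>}" "e \<in> {1, \<i>}"
  shows "((\<lambda>t. ds (z + axis j (of_real t * e)) k c) has_real_derivative dds z j e k c) (at 0)"
proof -
  have "(\<lambda>t::real. dpart sh_vec \<sigma> k c (sh_vec z j (of_real t * e))) differentiable (at 0)"
    using C2 assms unfolding C2_on_def by blast
  then show ?thesis
    unfolding ds_def dds_def dpart_def[of sh_vec "dpart sh_vec \<sigma> k c"]
    by (simp add: DERIV_deriv_iff_real_differentiable[symmetric] sh_vec_def)
qed

lemma G_line:
  assumes "z \<in> U"
  shows "((\<lambda>t::real. G (z + axis k (of_real t * c))) has_vector_derivative (Gp G k z * c)) (at 0)"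
proof -
  have "((\<lambda>b. G (z + axis k b)) has_field_derivative Gp G k z) (at 0)"
    using holo_line[OF holo, of z k 0] assms by simp
  then show ?thesis by (rule real_line)
qed

lemma Gp_line:
  assumes "z \<in> U"
  shows "((\<lambda>t::real. Gp G k (z + axis j (of_real t * e))) has_vector_derivative (Gq z j k * e)) (at 0)"
proof -
  have "(\<lambda>a. Gp G k (z + axis j a)) field_differentiable (at 0)"
    by (rule Gp_line_diff[OF holo openU assms])
  then have "((\<lambda>a. Gp G k (z + axis j a)) has_field_derivative Gq z j k) (at 0)"
    unfolding Gq_def by (simp add: DERIV_deriv_iff_field_differentiable)
  then show ?thesis by (rule real_line)
qed

lemma g1:
  assumes "z \<in> U"
  shows "((\<lambda>t::real. (cmod (G (z + axis k (of_real t * c))))\<^sup>2) has_real_derivative dg z k c) (at 0)"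
  using cmod2_deriv[OF G_line[OF assms, of k c]] by (simp add: dg_def)

lemma A1:
  assumes "z \<in> D" "z \<in> U" "c \<in> {1, \<i>}"
  shows "((\<lambda>t::real. A (z + axis k (of_real t * c))) has_real_derivative dA z k c) (at 0)"
proof -
  have "((\<lambda>t::real. (\<sigma> (z + axis k (of_real t * c)) + K) * (cmod (G (z + axis k (of_real t * c))))\<^sup>2)
     has_real_derivative (\<sigma> (z + axis k (of_real 0 * c)) + K) * dg z k c + ds z k c * (cmod (G (z + axis k (of_real 0 * c))))\<^sup>2) (at 0)"
    by (intro DERIV_mult' sigmaK g1 assms)
  then show ?thesis by (simp add: A_def dA_def algebra_simps)
qed

lemma g2:
  assumes "z \<in> U"
  shows "((\<lambda>t::real. dg (z + axis j (of_real t * e)) k c) has_real_derivative d2g z j e k c) (at 0)"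
proof -
  have "((\<lambda>t::real. cnj (G (z + axis j (of_real t * e))) * (Gp G k (z + axis j (of_real t * e)) * c))
     has_vector_derivative (cnj (G (z + axis j (of_real 0 * e))) * (Gq z j k * e * c) + cnj (Gp G j z * e) * (Gp G k (z + axis j (of_real 0 * e)) * c))) (at 0)"
    by (intro has_vector_derivative_mult has_vector_derivative_cnj has_vector_derivative_mult_left G_line Gp_line assms)
  from has_field_derivative_Re[OF this] have
    "((\<lambda>t::real. Re (cnj (G (z + axis j (of_real t * e))) * (Gp G k (z + axis j (of_real t * e)) * c)))
     has_real_derivative Re (cnj (G z) * (Gq z j k * e * c) + cnj (Gp G j z * e) * (Gp G k z * c))) (at 0)" by simp
  from DERIV_cmult[OF this, of 2] show ?thesis by (simp add: dg_def d2g_def)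
qed

lemma A2:
  assumes "z \<in> D" "z \<in> U" "c \<in> {1, \<i>}" "e \<in> {1, \<i>}"
  shows "((\<lambda>t::real. dA (z + axis j (of_real t * e)) k c) has_real_derivative d2A z j e k c) (at 0)"
proof -
  have "((\<lambda>t::real. ds (z + axis j (of_real t * e)) k c * (cmod (G (z + axis j (of_real t * e))))\<^sup>2
       + (\<sigma> (z + axis j (of_real t * e)) + K) * dg (z + axis j (of_real t * e)) k c)
     has_real_derivative (ds (z + axis j (of_real 0 * e)) k c * dg z j e + dds z j e k c * (cmod (G (z + axis j (of_real 0 * e))))\<^sup>2)
       + ((\<sigma> (z + axis j (of_real 0 * e)) + K) * d2g z j e k c + ds z j e * dg (z + axis j (of_real 0 * e)) k c)) (at 0)"
    by (intro DERIV_mult' DERIV_add sigmaK sigma2 g1 g2 assms)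
  then show ?thesis by (simp add: dA_def d2A_def algebra_simps)
qed

definition "Phi = (\<lambda>(z', w'). (\<sigma> z' + K) * (cmod (G z'))\<^sup>2 * (\<Sum>i<d. (cmod (w' i))\<^sup>2))"

lemma Phi_eq: "Phi (z', w') = A z' * B w'"
  by (simp add: Phi_def A_def B_def)

lemma B_upd:
  assumes "l < d"
  shows "B (w(l := x)) = (\<Sum>i\<in>{..<d} - {l}. (cmod (w i))\<^sup>2) + (cmod x)\<^sup>2"
proof -
  have "B (w(l := x)) = (\<Sum>i\<in>{..<d} - {l}. (cmod ((w(l := x)) i))\<^sup>2) + (cmod ((w(l := x)) l))\<^sup>2"
    unfolding B_def using assms by (subst sum.remove[of _ l]) auto
  moreover have "(\<Sum>i\<in>{..<d} - {l}. (cmod ((w(l := x)) i))\<^sup>2) = (\<Sum>i\<in>{..<d} - {l}. (cmod (w i))\<^sup>2)"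
    by (rule sum.cong) auto
  ultimately show ?thesis by (simp only: fun_upd_same)
qed

lemma B1:
  assumes "l < d"
  shows "((\<lambda>t::real. B (w(l := w l + of_real t * c))) has_real_derivative 2 * Re (cnj (w l) * c)) (at 0)"
proof -
  have h: "((\<lambda>t::real. w l + of_real t * c) has_vector_derivative c) (at 0)"
    by (auto intro!: derivative_eq_intros)
  have "((\<lambda>t::real. (\<Sum>i\<in>{..<d} - {l}. (cmod (w i))\<^sup>2) + (cmod (w l + of_real t * c))\<^sup>2) has_real_derivative
      0 + 2 * Re (cnj (w l + of_real 0 * c) * c)) (at 0)"
    by (intro DERIV_add DERIV_const cmod2_deriv h)
  then show ?thesis by (simp add: B_upd[OF assms])
qed

lemma FP1:
  assumes "z \<in> D" "z \<in> U" "c \<in> {1, \<i>}"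
  shows "dpart sh_prod Phi (Inl k) c (z, w') = dA z k c * B w'"
proof -
  have "((\<lambda>t::real. A (z + axis k (of_real t * c)) * B w') has_real_derivative dA z k c * B w') (at 0)"
    by (rule DERIV_cmult_right[OF A1[OF assms]])
  then show ?thesis unfolding dpart_def by (simp add: sh_prod_def Phi_eq DERIV_imp_deriv)
qed

lemma FP2:
  assumes "l < d"
  shows "dpart sh_prod Phi (Inr l) c (z', w') = A z' * (2 * Re (cnj (w' l) * c))"
proof -
  have "((\<lambda>t::real. A z' * B (w'(l := w' l + of_real t * c))) has_real_derivative A z' * (2 * Re (cnj (w' l) * c))) (at 0)"
    by (rule DERIV_cmult[OF B1[OF assms]])
  then show ?thesis unfolding dpart_def by (simp add: sh_prod_def Phi_eq DERIV_imp_deriv)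
qed

lemma SP11:
  assumes "z \<in> D" "z \<in> U" "c \<in> {1, \<i>}" "e \<in> {1, \<i>}"
  shows "dpart sh_prod (dpart sh_prod Phi (Inl k) c) (Inl j) e (z, w) = d2A z j e k c * B w"
proof -
  have ev: "\<forall>\<^sub>F t in nhds (0::real). dpart sh_prod Phi (Inl k) c (sh_prod (z, w) (Inl j) (of_real t * e))
        = dA (z + axis j (of_real t * e)) k c * B w"
  proof -
    have "open (D \<inter> U)" using openD openU by auto
    from ev_line[OF this, of z j e] assms have "\<forall>\<^sub>F t in nhds (0::real). z + axis j (of_real t * e) \<in> D \<inter> U" by auto
    then show ?thesis by (elim eventually_mono) (use assms(3) in \<open>auto simp: sh_prod_def intro!: FP1\<close>)
  qed
  have "((\<lambda>t::real. dA (z + axis j (of_real t * e)) k c * B w) has_real_derivative d2A z j e k c * B w) (at 0)"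
    by (rule DERIV_cmult_right[OF A2[OF assms]])
  then have "deriv (\<lambda>t::real. dA (z + axis j (of_real t * e)) k c * B w) 0 = d2A z j e k c * B w"
    by (rule DERIV_imp_deriv)
  then show ?thesis unfolding dpart_def[of sh_prod "dpart sh_prod Phi (Inl k) c"]
    using deriv_cong_ev[OF ev refl] by simp
qed

lemma SP12:
  assumes "z \<in> D" "z \<in> U" "e \<in> {1, \<i>}" "l < d"
  shows "dpart sh_prod (dpart sh_prod Phi (Inr l) c) (Inl j) e (z, w) = dA z j e * (2 * Re (cnj (w l) * c))"
proof -
  have "((\<lambda>t::real. A (z + axis j (of_real t * e)) * (2 * Re (cnj (w l) * c))) has_real_derivative dA z j e * (2 * Re (cnj (w l) * c))) (at 0)"
    by (rule DERIV_cmult_right[OF A1[OF assms(1-3)]])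
  then show ?thesis unfolding dpart_def[of sh_prod "dpart sh_prod Phi (Inr l) c"]
    by (simp add: sh_prod_def FP2[OF assms(4)] DERIV_imp_deriv)
qed

lemma SP21:
  assumes "z \<in> D" "z \<in> U" "c \<in> {1, \<i>}" "l < d"
  shows "dpart sh_prod (dpart sh_prod Phi (Inl k) c) (Inr l) e (z, w) = dA z k c * (2 * Re (cnj (w l) * e))"
proof -
  have "((\<lambda>t::real. dA z k c * B (w(l := w l + of_real t * e))) has_real_derivative dA z k c * (2 * Re (cnj (w l) * e))) (at 0)"
    by (rule DERIV_cmult[OF B1[OF assms(4)]])
  then show ?thesis unfolding dpart_def[of sh_prod "dpart sh_prod Phi (Inl k) c"]
    by (simp add: sh_prod_def FP1[OF assms(1-3)] DERIV_imp_deriv)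
qed

lemma SP22:
  assumes "l < d" "m < d"
  shows "dpart sh_prod (dpart sh_prod Phi (Inr m) c) (Inr l) e (z, w) = (if m = l then A z * (2 * Re (cnj e * c)) else 0)"
proof (cases "m = l")
  case True
  have h: "((\<lambda>t::real. cnj (w l + of_real t * e) * c) has_vector_derivative cnj e * c) (at 0)"
    by (auto intro!: derivative_eq_intros)
  have "((\<lambda>t::real. A z * (2 * Re (cnj (w l + of_real t * e) * c))) has_real_derivative A z * (2 * Re (cnj e * c))) (at 0)"
    by (intro DERIV_cmult has_field_derivative_Re h)
  moreover have "(\<lambda>t::real. dpart sh_prod Phi (Inr m) c (sh_prod (z,w) (Inr l) (of_real t * e))) = (\<lambda>t. A z * (2 * Re (cnj (w l + of_real t * e) * c)))"
    using True by (auto simp: sh_prod_def FP2[OF assms(1)])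
  ultimately show ?thesis unfolding dpart_def[of sh_prod "dpart sh_prod Phi (Inr m) c"]
    using True DERIV_imp_deriv by metis
next
  case False
  then show ?thesis unfolding dpart_def[of sh_prod "dpart sh_prod Phi (Inr m) c"]
    by (simp add: sh_prod_def FP2[OF assms(2)])
qed

definition "sw z j = (complex_of_real (ds z j 1) - \<i> * complex_of_real (ds z j \<i>)) / 2"
definition "aw z j = complex_of_real ((cmod (G z))\<^sup>2) * sw z j + complex_of_real (\<sigma> z + K) * cnj (G z) * Gp G j z"
definition "hA z j k = (complex_of_real (d2A z j 1 k 1 + d2A z j \<i> k \<i>) + \<i> * complex_of_real (d2A z j 1 k \<i> - d2A z j \<i> k 1)) / 4"

lemma hA_eq:
  "hA z j k = complex_of_real ((cmod (G z))\<^sup>2) * cHess sh_vec \<sigma> j k z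
     + complex_of_real (\<sigma> z + K) * Gp G j z * cnj (Gp G k z)
     + sw z j * G z * cnj (Gp G k z) + Gp G j z * cnj (G z) * cnj (sw z k)"
  unfolding hA_def d2A_def cHess_def dds_def[symmetric] sw_def dg_def d2g_def
  by (simp add: complex_eq_iff cmod_power2 power2_eq_square, simp add: field_simps)

lemma H11:
  assumes "z \<in> D" "z \<in> U"
  shows "cHess sh_prod Phi (Inl j) (Inl k) (z, w) = complex_of_real (B w) * hA z j k"
  unfolding cHess_def hA_def using assms
  by (simp add: SP11 algebra_simps)

lemma H12:
  assumes "z \<in> D" "z \<in> U" "l < d"
  shows "cHess sh_prod Phi (Inl j) (Inr l) (z, w) = aw z j * w l"
  unfolding cHess_def aw_def sw_def using assms
  by (simp add: SP12 dA_def dg_def complex_eq_iff cmod_power2 power2_eq_square, simp add: field_simps)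

lemma H21:
  assumes "z \<in> D" "z \<in> U" "l < d"
  shows "cHess sh_prod Phi (Inr l) (Inl k) (z, w) = cnj (aw z k) * cnj (w l)"
  unfolding cHess_def aw_def sw_def using assms
  by (simp add: SP21 dA_def dg_def complex_eq_iff cmod_power2 power2_eq_square, simp add: field_simps)

lemma H22:
  assumes "l < d" "m < d"
  shows "cHess sh_prod Phi (Inr l) (Inr m) (z, w) = (if l = m then complex_of_real (A z) else 0)"
  unfolding cHess_def using assms
  by (auto simp: SP22 complex_eq_iff)

definition "Qs z v = (\<Sum>j\<in>UNIV. \<Sum>k\<in>UNIV. cHess sh_vec \<sigma> j k z * v (Inl j) * cnj (v (Inl k)))"
definition "gam z v = (\<Sum>j\<in>UNIV. Gp G j z * v (Inl j))"
definition "rho z v = (\<Sum>j\<in>UNIV. sw z j * v (Inl j))"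
definition "alp z v = (\<Sum>j\<in>UNIV. aw z j * v (Inl j))"
definition "bet w v = (\<Sum>l<d. w l * cnj (v (Inr l)))"
definition "Nv v = (\<Sum>l<d. v (Inr l) * cnj (v (Inr l)))"

lemma sumI: "(\<Sum>a\<in>range Inl \<union> Inr ` {..<d}. f a) = (\<Sum>j\<in>UNIV. f (Inl j)) + (\<Sum>l<d. f (Inr l))"
  for f :: "'n + nat \<Rightarrow> complex"
proof -
  have "(\<Sum>a\<in>range Inl \<union> Inr ` {..<d}. f a) = (\<Sum>a\<in>range Inl. f a) + (\<Sum>a\<in>Inr ` {..<d}. f a)"
    by (rule sum.union_disjoint) auto
  also have "(\<Sum>a\<in>range Inl. f a) = (\<Sum>j\<in>UNIV. f (Inl j))"
    by (subst sum.reindex) (auto simp: inj_on_def)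
  also have "(\<Sum>a\<in>Inr ` {..<d}. f a) = (\<Sum>l<d. f (Inr l))"
    by (subst sum.reindex) (auto simp: inj_on_def)
  finally show ?thesis .
qed

lemma dsum: "(\<Sum>j\<in>E. \<Sum>k\<in>C. X j * cnj (Y k)) = (\<Sum>j\<in>E. X j) * cnj (\<Sum>k\<in>C. Y k)"
  by (simp add: sum_product cnj_sum)

lemma S11:
  "(\<Sum>j\<in>UNIV. \<Sum>k\<in>UNIV. complex_of_real (B w) * hA z j k * v (Inl j) * cnj (v (Inl k)))
   = complex_of_real (B w) * (complex_of_real ((cmod (G z))\<^sup>2) * Qs z v
       + complex_of_real (\<sigma> z + K) * gam z v * cnj (gam z v)
       + G z * rho z v * cnj (gam z v) + cnj (G z) * gam z v * cnj (rho z v))"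
proof -
  define b where "b = complex_of_real (B w)"
  define g where "g = complex_of_real ((cmod (G z))\<^sup>2)"
  define s where "s = complex_of_real (\<sigma> z + K)"
  have pt: "b * hA z j k * v (Inl j) * cnj (v (Inl k)) =
      b * g * (cHess sh_vec \<sigma> j k z * v (Inl j) * cnj (v (Inl k)))
    + b * s * ((Gp G j z * v (Inl j)) * cnj (Gp G k z * v (Inl k)))
    + b * G z * ((sw z j * v (Inl j)) * cnj (Gp G k z * v (Inl k)))
    + b * cnj (G z) * ((Gp G j z * v (Inl j)) * cnj (sw z k * v (Inl k)))" for j k
    by (simp add: hA_eq g_def s_def algebra_simps)
  have "(\<Sum>j\<in>UNIV. \<Sum>k\<in>UNIV. b * hA z j k * v (Inl j) * cnj (v (Inl k)))
     = b * g * (\<Sum>j\<in>UNIV. \<Sum>k\<in>UNIV. cHess sh_vec \<sigma> j k z * v (Inl j) * cnj (v (Inl k)))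
     + b * s * (\<Sum>j\<in>UNIV. \<Sum>k\<in>UNIV. (Gp G j z * v (Inl j)) * cnj (Gp G k z * v (Inl k)))
     + b * G z * (\<Sum>j\<in>UNIV. \<Sum>k\<in>UNIV. (sw z j * v (Inl j)) * cnj (Gp G k z * v (Inl k)))
     + b * cnj (G z) * (\<Sum>j\<in>UNIV. \<Sum>k\<in>UNIV. (Gp G j z * v (Inl j)) * cnj (sw z k * v (Inl k)))"
    by (simp only: pt sum.distrib sum_distrib_left)
  also have "\<dots> = b * (g * Qs z v + s * gam z v * cnj (gam z v) + G z * rho z v * cnj (gam z v) + cnj (G z) * gam z v * cnj (rho z v))"
    unfolding dsum Qs_def gam_def rho_def by (simp add: algebra_simps)
  finally show ?thesis by (simp add: b_def g_def s_def)
qed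

lemma S_eq:
  assumes "z \<in> D" "z \<in> U"
  shows "(\<Sum>a\<in>range Inl \<union> Inr ` {..<d}. \<Sum>b\<in>range Inl \<union> Inr ` {..<d}. cHess sh_prod Phi a b (z, w) * v a * cnj (v b))
   = complex_of_real (B w) * (complex_of_real ((cmod (G z))\<^sup>2) * Qs z v
       + complex_of_real (\<sigma> z + K) * gam z v * cnj (gam z v)
       + G z * rho z v * cnj (gam z v) + cnj (G z) * gam z v * cnj (rho z v))
     + alp z v * bet w v + cnj (alp z v) * cnj (bet w v) + complex_of_real (A z) * Nv v"
proof -
  have e11: "(\<Sum>j\<in>UNIV. \<Sum>k\<in>UNIV. cHess sh_prod Phi (Inl j) (Inl k) (z, w) * v (Inl j) * cnj (v (Inl k)))
     = complex_of_real (B w) * (complex_of_real ((cmod (G z))\<^sup>2) * Qs z v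
       + complex_of_real (\<sigma> z + K) * gam z v * cnj (gam z v)
       + G z * rho z v * cnj (gam z v) + cnj (G z) * gam z v * cnj (rho z v))"
    using S11[of w z v] by (simp add: H11[OF assms])
  have e12: "(\<Sum>j\<in>UNIV. \<Sum>l<d. cHess sh_prod Phi (Inl j) (Inr l) (z, w) * v (Inl j) * cnj (v (Inr l)))
     = alp z v * bet w v"
  proof -
    have "(\<Sum>j\<in>UNIV. \<Sum>l<d. cHess sh_prod Phi (Inl j) (Inr l) (z, w) * v (Inl j) * cnj (v (Inr l)))
      = (\<Sum>j\<in>UNIV. \<Sum>l<d. (aw z j * v (Inl j)) * (w l * cnj (v (Inr l))))"
      by (intro sum.cong refl) (simp add: H12[OF assms] algebra_simps)
    then show ?thesis by (simp add: alp_def bet_def sum_product)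
  qed
  have e21: "(\<Sum>l<d. \<Sum>k\<in>UNIV. cHess sh_prod Phi (Inr l) (Inl k) (z, w) * v (Inr l) * cnj (v (Inl k)))
     = cnj (alp z v) * cnj (bet w v)"
  proof -
    have "(\<Sum>l<d. \<Sum>k\<in>UNIV. cHess sh_prod Phi (Inr l) (Inl k) (z, w) * v (Inr l) * cnj (v (Inl k)))
      = (\<Sum>l<d. \<Sum>k\<in>UNIV. (cnj (w l) * v (Inr l)) * cnj (aw z k * v (Inl k)))"
      by (intro sum.cong refl) (simp add: H21[OF assms] algebra_simps)
    also have "\<dots> = (\<Sum>l<d. cnj (w l) * v (Inr l)) * cnj (alp z v)"
      unfolding dsum alp_def ..
    also have "(\<Sum>l<d. cnj (w l) * v (Inr l)) = cnj (bet w v)" by (simp add: bet_def cnj_sum)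
    finally show ?thesis by (simp add: mult.commute)
  qed
  have e22: "(\<Sum>l<d. \<Sum>m<d. cHess sh_prod Phi (Inr l) (Inr m) (z, w) * v (Inr l) * cnj (v (Inr m)))
     = complex_of_real (A z) * Nv v"
  proof -
    have "(\<Sum>l<d. \<Sum>m<d. cHess sh_prod Phi (Inr l) (Inr m) (z, w) * v (Inr l) * cnj (v (Inr m)))
      = (\<Sum>l<d. complex_of_real (A z) * (v (Inr l) * cnj (v (Inr l))))"
    proof (intro sum.cong refl)
      fix l assume l: "l \<in> {..<d}"
      have "(\<Sum>m<d. cHess sh_prod Phi (Inr l) (Inr m) (z, w) * v (Inr l) * cnj (v (Inr m)))
        = (\<Sum>m<d. if l = m then complex_of_real (A z) * (v (Inr l) * cnj (v (Inr l))) else 0)"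
        by (intro sum.cong refl) (use l in \<open>auto simp: H22\<close>)
      also have "\<dots> = complex_of_real (A z) * (v (Inr l) * cnj (v (Inr l)))"
        using l by (simp add: sum.delta)
      finally show "(\<Sum>m<d. cHess sh_prod Phi (Inr l) (Inr m) (z, w) * v (Inr l) * cnj (v (Inr m)))
        = complex_of_real (A z) * (v (Inr l) * cnj (v (Inr l)))" .
    qed
    then show ?thesis by (simp add: Nv_def sum_distrib_left)
  qed
  show ?thesis
    unfolding sumI sum.distrib e11 e12 e21 e22 by (simp add: algebra_simps)
qed

lemma alp_eq: "alp z v = complex_of_real ((cmod (G z))\<^sup>2) * rho z v + complex_of_real (\<sigma> z + K) * cnj (G z) * gam z v"
  unfolding alp_def rho_def gam_def aw_def by (simp add: sum.distrib sum_distrib_left algebra_simps)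

lemma pos_point:
  assumes zD: "z \<in> D" and zU: "z \<in> U" and hyp: "spsh_at sh_vec UNIV \<sigma> z" and sK: "\<sigma> z + K > 0"
    and key: "\<And>\<xi>. (\<exists>j. \<xi> j \<noteq> 0) \<Longrightarrow>
        (cmod (\<Sum>j\<in>UNIV. sw z j * \<xi> j))\<^sup>2 < (\<sigma> z + K) * Re (\<Sum>j\<in>UNIV. \<Sum>k\<in>UNIV. cHess sh_vec \<sigma> j k z * \<xi> j * cnj (\<xi> k))"
    and w: "\<exists>i<d. w i \<noteq> 0" and v: "\<exists>a\<in>range Inl \<union> Inr ` {..<d}. v a \<noteq> 0"
  shows "Im (\<Sum>a\<in>range Inl \<union> Inr ` {..<d}. \<Sum>b\<in>range Inl \<union> Inr ` {..<d}. cHess sh_prod Phi a b (z, w) * v a * cnj (v b)) = 0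
       \<and> Re (\<Sum>a\<in>range Inl \<union> Inr ` {..<d}. \<Sum>b\<in>range Inl \<union> Inr ` {..<d}. cHess sh_prod Phi a b (z, w) * v a * cnj (v b)) > 0"
proof -
  define s where "s = \<sigma> z + K"
  define g where "g = (cmod (G z))\<^sup>2"
  define q where "q = Re (Qs z v)"
  define Nr where "Nr = (\<Sum>l<d. (cmod (v (Inr l)))\<^sup>2)"
  have g: "g > 0" using Gnz zU by (simp add: g_def)
  have Bw: "B w > 0"
  proof -
    obtain i where i: "i < d" "w i \<noteq> 0" using w by blast
    have "0 < (cmod (w i))\<^sup>2" using i by simp
    also have "\<dots> \<le> B w" unfolding B_def
      by (rule member_le_sum) (use i in auto)
    finally show ?thesis .
  qed
  have Nr0: "Nr \<ge> 0" by (simp add: Nr_def sum_nonneg)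
  have Nv: "Nv v = complex_of_real Nr"
    unfolding Nv_def Nr_def of_real_sum by (simp add: complex_norm_square del: of_real_power)
  have Qs: "Qs z v = complex_of_real q"
  proof (cases "\<exists>j. v (Inl j) \<noteq> 0")
    case True
    from hyp True have "Im (Qs z v) = 0"
      unfolding spsh_at_def Qs_def Let_def by auto
    then show ?thesis by (simp add: q_def complex_eq_iff)
  next
    case False
    then show ?thesis by (simp add: Qs_def q_def)
  qed
  have A: "A z = s * g" by (simp add: A_def s_def g_def)
  define Sr where "Sr = B w * (g * q + s * (cmod (gam z v))\<^sup>2 + 2 * Re (G z * rho z v * cnj (gam z v)))
      + 2 * Re (alp z v * bet w v) + s * g * Nr"
  have "(\<Sum>a\<in>range Inl \<union> Inr ` {..<d}. \<Sum>b\<in>range Inl \<union> Inr ` {..<d}. cHess sh_prod Phi a b (z, w) * v a * cnj (v b))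
     = complex_of_real Sr"
  proof -
    have e1: "gam z v * cnj (gam z v) = complex_of_real ((cmod (gam z v))\<^sup>2)"
      by (simp add: complex_norm_square del: of_real_power)
    have e2: "G z * rho z v * cnj (gam z v) + cnj (G z) * gam z v * cnj (rho z v) = complex_of_real (2 * Re (G z * rho z v * cnj (gam z v)))"
      using complex_add_cnj[of "G z * rho z v * cnj (gam z v)"] by (simp add: algebra_simps)
    have e3: "alp z v * bet w v + cnj (alp z v) * cnj (bet w v) = complex_of_real (2 * Re (alp z v * bet w v))"
      using complex_add_cnj[of "alp z v * bet w v"] by simp
    have "complex_of_real (B w) * (complex_of_real g * complex_of_real q + complex_of_real s * (gam z v * cnj (gam z v))
       + (G z * rho z v * cnj (gam z v) + cnj (G z) * gam z v * cnj (rho z v)))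
       + (alp z v * bet w v + cnj (alp z v) * cnj (bet w v)) + complex_of_real (s * g) * complex_of_real Nr = complex_of_real Sr"
      unfolding e1 e2 e3 Sr_def by simp
    then show ?thesis unfolding S_eq[OF zD zU] Qs Nv A g_def s_def by (simp add: algebra_simps)
  qed
  moreover have "Sr > 0"
  proof (cases "\<exists>j. v (Inl j) \<noteq> 0")
    case True
    have R: "q * s > (cmod (rho z v))\<^sup>2"
      using key[OF True] by (simp add: rho_def q_def Qs_def s_def mult.commute)
    have X: "(cmod (alp z v))\<^sup>2 = g^2 * (cmod (rho z v))\<^sup>2 + s^2 * g * (cmod (gam z v))\<^sup>2 + 2 * g * s * Re (G z * rho z v * cnj (gam z v))"
      unfolding alp_eq g_def s_def cmod_power2 by (simp add: power2_eq_square algebra_simps)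
    have b: "(cmod (bet w v))\<^sup>2 \<le> B w * Nr"
      unfolding bet_def B_def Nr_def by (rule bet_bound)
    have r: "2 * Re (alp z v * bet w v) \<ge> - 2 * cmod (alp z v) * cmod (bet w v)"
      using abs_Re_le_cmod[of "alp z v * bet w v"] by (simp add: norm_mult)
    show ?thesis unfolding Sr_def
      by (rule fin_ineq[OF Bw g _ Nr0 X _ refl _ b r R]) (use sK in \<open>auto simp: s_def\<close>)
  next
    case False
    then have z1: "gam z v = 0" "rho z v = 0" "q = 0"
      by (simp_all add: gam_def rho_def q_def Qs_def)
    then have z2: "alp z v = 0" by (simp add: alp_eq)
    obtain a where a: "a \<in> range Inl \<union> Inr ` {..<d}" "v a \<noteq> 0" using v by blast
    with False obtain l where l: "l < d" "v (Inr l) \<noteq> 0" by auto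
    have "0 < (cmod (v (Inr l)))\<^sup>2" using l by simp
    also have "\<dots> \<le> Nr" unfolding Nr_def by (rule member_le_sum) (use l in auto)
    finally have "Nr > 0" .
    then show ?thesis using z1 z2 sK g by (simp add: Sr_def s_def)
  qed
  ultimately show ?thesis by simp
qed

end

theorem lemma3p1:
  fixes D :: "(complex ^ 'n) set" and \<sigma> :: "complex ^ 'n \<Rightarrow> real"
  assumes "open D"
    and "C2_on D \<sigma>"
    and "\<forall>z\<in>D. spsh_at sh_vec UNIV \<sigma> z"
  shows "\<forall>L. compact L \<and> L \<subseteq> D \<longrightarrow>
    (\<exists>KL>0. \<forall>d::nat. d \<ge> 1 \<longrightarrow>
       (\<forall>G :: complex ^ 'n \<Rightarrow> complex.
          (\<exists>U. open U \<and> L \<subseteq> U \<and> holo_on U G \<and> (\<forall>z\<in>U. G z \<noteq> 0)) \<longrightarrow>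
          (\<forall>K::real. K \<ge> KL \<longrightarrow>
             (\<forall>z\<in>L. \<forall>w::nat \<Rightarrow> complex. (\<exists>i<d. w i \<noteq> 0) \<longrightarrow>
                spsh_at sh_prod (range Inl \<union> Inr ` {..<d})
                  (\<lambda>(z', w'). (\<sigma> z' + K) * (cmod (G z'))\<^sup>2 * (\<Sum>i<d. (cmod (w' i))\<^sup>2))
                  (z, w)))))"
proof (intro allI impI)
  fix L :: "(complex ^ 'n) set" assume L: "compact L \<and> L \<subseteq> D"
  from partA[OF assms(2) assms(3) conjunct1[OF L] conjunct2[OF L]]
  obtain KL where KL: "KL > 0" and KLp': "\<forall>K\<ge>KL. \<forall>z\<in>L. \<sigma> z + K > 0 \<and> (\<forall>\<xi>::'n \<Rightarrow> complex. (\<exists>j. \<xi> j \<noteq> 0) \<longrightarrow>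
      (cmod (\<Sum>j\<in>UNIV. swo \<sigma> z j * \<xi> j))\<^sup>2 < (\<sigma> z + K) * Re (\<Sum>j\<in>UNIV. \<Sum>k\<in>UNIV. cHess sh_vec \<sigma> j k z * \<xi> j * cnj (\<xi> k)))"
    by (elim exE conjE)
  have KLp: "\<sigma> z + K > 0 \<and> (\<forall>\<xi>::'n \<Rightarrow> complex. (\<exists>j. \<xi> j \<noteq> 0) \<longrightarrow>
      (cmod (\<Sum>j\<in>UNIV. swo \<sigma> z j * \<xi> j))\<^sup>2 < (\<sigma> z + K) * Re (\<Sum>j\<in>UNIV. \<Sum>k\<in>UNIV. cHess sh_vec \<sigma> j k z * \<xi> j * cnj (\<xi> k)))"
    if "K \<ge> KL" "z \<in> L" for K z
    using KLp' that by simp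
  show "\<exists>KL>0. \<forall>d::nat. d \<ge> 1 \<longrightarrow>
       (\<forall>G :: complex ^ 'n \<Rightarrow> complex.
          (\<exists>U. open U \<and> L \<subseteq> U \<and> holo_on U G \<and> (\<forall>z\<in>U. G z \<noteq> 0)) \<longrightarrow>
          (\<forall>K::real. K \<ge> KL \<longrightarrow>
             (\<forall>z\<in>L. \<forall>w::nat \<Rightarrow> complex. (\<exists>i<d. w i \<noteq> 0) \<longrightarrow>
                spsh_at sh_prod (range Inl \<union> Inr ` {..<d})
                  (\<lambda>(z', w'). (\<sigma> z' + K) * (cmod (G z'))\<^sup>2 * (\<Sum>i<d. (cmod (w' i))\<^sup>2))
                  (z, w))))"
  proof (intro exI[of _ KL] conjI KL allI impI ballI)
    fix d :: nat and G :: "complex ^ 'n \<Rightarrow> complex" and K :: real and z :: "complex ^ 'n" and w :: "nat \<Rightarrow> complex"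
    assume U: "\<exists>U. open U \<and> L \<subseteq> U \<and> holo_on U G \<and> (\<forall>z\<in>U. G z \<noteq> 0)"
      and K: "KL \<le> K" and z: "z \<in> L" and w: "\<exists>i<d. w i \<noteq> 0"
    obtain U where U: "open U" "L \<subseteq> U" "holo_on U G" "\<forall>z\<in>U. G z \<noteq> 0" using U by blast
    interpret LS D \<sigma> U G K d
      using assms(1,2) U(1,3,4) by unfold_locales
    have zD: "z \<in> D" and zU: "z \<in> U" using z L U by auto
    have kp: "\<sigma> z + K > 0" and key0: "\<And>\<xi>::'n \<Rightarrow> complex. (\<exists>j. \<xi> j \<noteq> 0) \<Longrightarrow>
      (cmod (\<Sum>j\<in>UNIV. swo \<sigma> z j * \<xi> j))\<^sup>2 < (\<sigma> z + K) * Re (\<Sum>j\<in>UNIV. \<Sum>k\<in>UNIV. cHess sh_vec \<sigma> j k z * \<xi> j * cnj (\<xi> k))"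
      using KLp[OF K z] by auto
    have swe: "sw z j = swo \<sigma> z j" for j by (simp only: sw_def ds_def swo_def)
    have key: "\<And>\<xi>::'n \<Rightarrow> complex. (\<exists>j. \<xi> j \<noteq> 0) \<Longrightarrow>
      (cmod (\<Sum>j\<in>UNIV. sw z j * \<xi> j))\<^sup>2 < (\<sigma> z + K) * Re (\<Sum>j\<in>UNIV. \<Sum>k\<in>UNIV. cHess sh_vec \<sigma> j k z * \<xi> j * cnj (\<xi> k))"
      unfolding swe by (rule key0)
    have hyp: "spsh_at sh_vec UNIV \<sigma> z" using assms(3) zD by blast
    have Pe: "(\<lambda>(z', w'). (\<sigma> z' + K) * (cmod (G z'))\<^sup>2 * (\<Sum>i<d. (cmod (w' i))\<^sup>2)) = Phi"
      by (simp add: Phi_def)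
    show "spsh_at sh_prod (range Inl \<union> Inr ` {..<d})
        (\<lambda>(z', w'). (\<sigma> z' + K) * (cmod (G z'))\<^sup>2 * (\<Sum>i<d. (cmod (w' i))\<^sup>2)) (z, w)"
      unfolding Pe spsh_at_def Let_def
    proof (intro allI impI)
      fix v :: "'n + nat \<Rightarrow> complex" assume v: "\<exists>i\<in>range Inl \<union> Inr ` {..<d}. v i \<noteq> 0"
      show "Im (\<Sum>j\<in>range Inl \<union> Inr ` {..<d}. \<Sum>k\<in>range Inl \<union> Inr ` {..<d}. cHess sh_prod Phi j k (z, w) * v j * cnj (v k)) = 0 \<and>
          0 < Re (\<Sum>j\<in>range Inl \<union> Inr ` {..<d}. \<Sum>k\<in>range Inl \<union> Inr ` {..<d}. cHess sh_prod Phi j k (z, w) * v j * cnj (v k))"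
        using pos_point[OF zD zU hyp kp key w v] by simp
    qed
  qed
qed

end
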